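(* For $n\in\mathbb{N}$ let $f_n(z)=e^{nz}$, $a_n\equiv0$, $b_n\equiv\infty$, and $c_n(z)=-e^{in\,\mathrm{Im}(z)}$ on $\mathbb{D}$. Then $a_n,b_n,c_n:\mathbb{D}\to\widehat{\mathbb{C}}$ are continuous, $f_n$ omits $a_n,b_n,c_n$ (i.e. $f_n(z)\notin\{a_n(z),b_n(z),c_n(z)\}$ for all $z\in\mathbb{D}$), $\sigma(a_n(z),b_n(z))=\pi/2$ and $\sigma(a_n(z),c_n(z))=\sigma(b_n(z),c_n(z))=\pi/4$ for all $n$ and all $z\in\mathbb{D}$, but $(f_n)_n$ is not normal in $\mathbb{D}$. In particular, the conclusion of the statement "if each $f$ in a family of meromorphic functions on $\mathbb{D}$ omits three functions $a_f,b_f,c_f$ with $\sigma(a_f,b_f)\sigma(a_f,c_f)\sigma(b_f,c_f)\ge\varepsilon$ on $\mathbb{D}$ then the family is normal" fails if $a_f,b_f,c_f$ are only required to be continuous.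
   Context: $\mathbb{D}$ is the open unit disc, $\widehat{\mathbb{C}}$ the Riemann sphere, and $\sigma$ the spherical (geodesic) metric on $\widehat{\mathbb{C}}$ identified with the sphere of diameter $1$ (so $\sigma(0,\infty)=\pi/2$). Normality is in the sense of Montel: every sequence has a subsequence converging locally uniformly with respect to $\sigma$ to a meromorphic function or to $\infty$. *)

theory Defs
  imports "HOL-Analysis.Analysis"
begin

datatype ecomplex = Fin complex | Infty

text \<open>Chordal distance on the sphere of diameter 1 (stereographic projection).\<close>
fun chordal :: "ecomplex \<Rightarrow> ecomplex \<Rightarrow> real" where
  "chordal (Fin z) (Fin w) = cmod (z - w) / sqrt ((1 + (cmod z)\<^sup>2) * (1 + (cmod w)\<^sup>2))"
| "chordal (Fin z) Infty = 1 / sqrt (1 + (cmod z)\<^sup>2)"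
| "chordal Infty (Fin w) = 1 / sqrt (1 + (cmod w)\<^sup>2)"
| "chordal Infty Infty = 0"

text \<open>Spherical (geodesic) metric on the sphere of diameter 1: a chord of length
  c subtends a great-circle arc of length arcsin c. Thus sigma 0 infinity = pi/2.\<close>
definition sigma :: "ecomplex \<Rightarrow> ecomplex \<Rightarrow> real" where
  "sigma x y = arcsin (chordal x y)"

definition sph_continuous_on :: "complex set \<Rightarrow> (complex \<Rightarrow> ecomplex) \<Rightarrow> bool" where
  "sph_continuous_on D g \<longleftrightarrow>
     (\<forall>z\<in>D. \<forall>e>0. \<exists>d>0. \<forall>w\<in>D. cmod (w - z) < d \<longrightarrow> sigma (g w) (g z) < e)"

text \<open>Meromorphic on D (sphere-valued, the constant infinity allowed):
  near every point of D either g or 1/g is holomorphic.\<close>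
definition sph_meromorphic_on :: "complex set \<Rightarrow> (complex \<Rightarrow> ecomplex) \<Rightarrow> bool" where
  "sph_meromorphic_on D g \<longleftrightarrow>
     (\<forall>z0\<in>D. \<exists>r>0. ball z0 r \<subseteq> D \<and>
        ((\<exists>h. h holomorphic_on ball z0 r \<and> (\<forall>w\<in>ball z0 r. g w = Fin (h w))) \<or>
         (\<exists>h. h holomorphic_on ball z0 r \<and>
              (\<forall>w\<in>ball z0 r. (h w = 0 \<longrightarrow> g w = Infty) \<and> (h w \<noteq> 0 \<longrightarrow> g w = Fin (1 / h w))))))"

definition sph_loc_unif_conv :: "complex set \<Rightarrow> (nat \<Rightarrow> complex \<Rightarrow> ecomplex) \<Rightarrow> (complex \<Rightarrow> ecomplex) \<Rightarrow> bool" where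
  "sph_loc_unif_conv D F g \<longleftrightarrow>
     (\<forall>K. compact K \<and> K \<subseteq> D \<longrightarrow>
        (\<forall>e>0. \<exists>N. \<forall>k\<ge>N. \<forall>z\<in>K. sigma (F k z) (g z) < e))"

definition normal_family :: "complex set \<Rightarrow> (complex \<Rightarrow> ecomplex) set \<Rightarrow> bool" where
  "normal_family D Fam \<longleftrightarrow>
     (\<forall>F :: nat \<Rightarrow> complex \<Rightarrow> ecomplex. range F \<subseteq> Fam \<longrightarrow>
        (\<exists>r g. strict_mono r \<and> sph_meromorphic_on D g \<and> sph_loc_unif_conv D (F \<circ> r) g))"

definition unit_disc :: "complex set" where
  "unit_disc = ball 0 1"

end

theory Submission imports Defs begin

lemma chordal_fin_le1: "chordal (Fin x) (Fin y) \<le> 1"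
proof -
  have "cmod (x - y) \<le> cmod x + cmod y" by (rule norm_triangle_ineq4)
  also have "\<dots> \<le> sqrt ((1 + (cmod x)\<^sup>2) * (1 + (cmod y)\<^sup>2))"
  proof (rule real_le_rsqrt)
    have "2 * cmod x * cmod y \<le> 1 + (cmod x * cmod y)\<^sup>2"
      using sum_squares_bound[of 1 "cmod x * cmod y"] by (simp add: power2_eq_square algebra_simps)
    then show "(cmod x + cmod y)\<^sup>2 \<le> (1 + (cmod x)\<^sup>2) * (1 + (cmod y)\<^sup>2)"
      by (simp add: power2_eq_square algebra_simps)
  qed
  finally have h: "cmod (x - y) \<le> sqrt ((1 + (cmod x)\<^sup>2) * (1 + (cmod y)\<^sup>2))" .
  have pos: "0 < sqrt ((1 + (cmod x)\<^sup>2) * (1 + (cmod y)\<^sup>2))"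
    by (simp add: add_pos_nonneg)
  show ?thesis using h pos by (simp add: pos_divide_le_eq)
qed

lemma big_not_close:
  fixes r :: "nat \<Rightarrow> nat" and t :: real and w :: complex
  assumes r: "strict_mono r" and t: "t > 0"
    and conv: "\<forall>e>0. \<exists>N. \<forall>k\<ge>N. sigma (Fin (exp (of_nat (r k) * of_real t))) (Fin w) < e"
  shows False
proof -
  define S where "S = sqrt (1 + (cmod w)\<^sup>2)"
  have S1: "S \<ge> 1" unfolding S_def by simp
  define c0 where "c0 = 1 / (4 * S)"
  have c0pos: "c0 > 0" and c0le: "c0 \<le> 1" using S1 by (auto simp: c0_def field_simps)
  define e where "e = arcsin c0"
  have epos: "e > 0" unfolding e_def using arcsin_less_mono[of 0 c0] c0pos c0le by simp
  obtain N where N: "\<And>k. k \<ge> N \<Longrightarrow> sigma (Fin (exp (of_nat (r k) * of_real t))) (Fin w) < e"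
    using conv epos by blast
  define k where "k = max N (nat \<lceil>(2 * cmod w + 1) / t\<rceil>)"
  define m where "m = r k"
  have km: "k \<le> m" unfolding m_def using r by (simp add: seq_suble)
  have "(2 * cmod w + 1) / t \<le> real k" unfolding k_def by linarith
  then have "2 * cmod w + 1 \<le> real m * t" using km t
    by (smt (verit, ccfv_SIG) mult_right_mono of_nat_le_iff pos_divide_le_eq)
  define X where "X = exp (real m * t)"
  have X1: "2 * cmod w + 1 \<le> X" unfolding X_def
    using exp_ge_add_one_self[of "real m * t"] \<open>2 * cmod w + 1 \<le> real m * t\<close> by linarith
  have Xpos: "X > 0" unfolding X_def by simp
  have eqX: "exp (of_nat m * of_real t) = (of_real X :: complex)"
    unfolding X_def by (simp add: exp_of_real[symmetric])
  have num: "cmod (of_real X - w) \<ge> X / 2"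
  proof -
    have "cmod (of_real X - w) \<ge> cmod (of_real X :: complex) - cmod w" by (rule norm_triangle_ineq2)
    then show ?thesis using X1 Xpos by simp
  qed
  have den: "sqrt (1 + X\<^sup>2) \<le> 2 * X"
  proof -
    have Xge1: "X \<ge> 1" using X1 norm_ge_zero[of w] by linarith
    have "1 * 1 \<le> X * X" using Xge1 by (intro mult_mono) auto
    then have "1 + X\<^sup>2 \<le> (2 * X)\<^sup>2" by (simp add: power2_eq_square)
    then have "sqrt (1 + X\<^sup>2) \<le> sqrt ((2 * X)\<^sup>2)" by (rule real_sqrt_le_mono)
    moreover have "sqrt ((2 * X)\<^sup>2) = 2 * X" using Xpos by (simp only: real_sqrt_abs abs_of_pos mult_pos_pos zero_less_numeral)
    ultimately show ?thesis by linarith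
  qed
  have ch: "chordal (Fin (of_real X)) (Fin w) = cmod (of_real X - w) / (sqrt (1 + X\<^sup>2) * S)"
    by (simp add: S_def real_sqrt_mult)
  have spos: "sqrt (1 + X\<^sup>2) > 0" by (simp add: add_pos_nonneg)
  have "c0 = (X / 2) / ((2 * X) * S)" unfolding c0_def using Xpos by (simp add: field_simps)
  also have "\<dots> \<le> cmod (of_real X - w) / (sqrt (1 + X\<^sup>2) * S)"
    by (rule frac_le) (use num den spos S1 Xpos in auto)
  finally have c0ch: "c0 \<le> chordal (Fin (of_real X)) (Fin w)" by (subst ch)
  have cle: "chordal (Fin (of_real X)) (Fin w) \<le> 1" by (rule chordal_fin_le1)
  have "e \<le> sigma (Fin (of_real X)) (Fin w)"
    unfolding e_def sigma_def
    using c0ch c0le c0pos cle by (intro arcsin_le_mono[THEN iffD2]) linarith+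
  moreover have "sigma (Fin (of_real X)) (Fin w) < e"
    using N[of k] eqX unfolding m_def k_def by auto
  ultimately show False by simp
qed
lemma chordal_fin_nonneg: "chordal (Fin x) (Fin y) \<ge> 0" by simp

lemma chordal_fin_le: "chordal (Fin x) (Fin y) \<le> cmod (x - y)"
proof -
  have "1 \<le> sqrt ((1 + (cmod x)\<^sup>2) * (1 + (cmod y)\<^sup>2))"
  proof -
    have a: "1 \<le> 1 + (cmod x)\<^sup>2" "1 \<le> 1 + (cmod y)\<^sup>2" by simp_all
    have "1 * 1 \<le> (1 + (cmod x)\<^sup>2) * (1 + (cmod y)\<^sup>2)"
      by (rule mult_mono[OF a]) simp_all
    then show ?thesis by simp
  qed
  then show ?thesis by (simp add: divide_le_eq mult_le_cancel_left1 mult_left_le) 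
qed

lemma sigma_self_fin: "sigma (Fin x) (Fin x) = 0" by (simp add: sigma_def)
lemma sigma_self_inf: "sigma Infty Infty = 0" by (simp add: sigma_def)

lemma sigma_small:
  assumes "e > 0"
  shows "\<exists>d>0. \<forall>x y. cmod (x - y) < d \<longrightarrow> sigma (Fin x) (Fin y) < e"
proof -
  have "continuous (at 0) arcsin" by (simp add: isCont_arcsin)
  then obtain d where d0: "d > 0" and d1: "\<And>x. dist x 0 < d \<Longrightarrow> dist (arcsin x) (arcsin 0) < e"
    using assms unfolding continuous_at_eps_delta by blast
  have d: "d > 0" "\<And>x. \<bar>x\<bar> < d \<Longrightarrow> \<bar>arcsin x\<bar> < e"
    using d0 d1 by (auto simp: dist_real_def)
  show ?thesis
  proof (intro exI[of _ d] conjI allI impI)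
    fix x y assume "cmod (x - y) < d"
    then have "\<bar>chordal (Fin x) (Fin y)\<bar> < d" using chordal_fin_le[of x y] chordal_fin_nonneg[of x y] by linarith
    then show "sigma (Fin x) (Fin y) < e" using d(2) unfolding sigma_def by fastforce
  qed (use d in auto)
qed

lemma cmod_expi: "cmod (exp (\<i> * of_nat n * of_real t)) = 1"
  by (simp add: norm_exp_eq_Re)

theorem mainTheorem2:
  fixes f a b c :: "nat \<Rightarrow> complex \<Rightarrow> ecomplex"
  assumes f_def: "\<And>n z. f n z = Fin (exp (of_nat n * z))"
      and a_def: "\<And>n z. a n z = Fin 0"
      and b_def: "\<And>n z. b n z = Infty"
      and c_def: "\<And>n z. c n z = Fin (- exp (\<i> * of_nat n * of_real (Im z)))"
  shows "(\<forall>n. sph_continuous_on unit_disc (a n) \<and> sph_continuous_on unit_disc (b n)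
              \<and> sph_continuous_on unit_disc (c n))
       \<and> (\<forall>n. \<forall>z\<in>unit_disc. f n z \<notin> {a n z, b n z, c n z})
       \<and> (\<forall>n. \<forall>z\<in>unit_disc. sigma (a n z) (b n z) = pi / 2
              \<and> sigma (a n z) (c n z) = pi / 4 \<and> sigma (b n z) (c n z) = pi / 4)
       \<and> \<not> normal_family unit_disc (range f)
       \<and> \<not> (\<forall>(Fam :: (complex \<Rightarrow> ecomplex) set) (\<epsilon>::real). \<epsilon> > 0 \<and>
              (\<forall>g\<in>Fam. sph_meromorphic_on unit_disc g \<and>
                 (\<exists>ag bg cg. sph_continuous_on unit_disc ag \<and> sph_continuous_on unit_disc bg
                    \<and> sph_continuous_on unit_disc cg
                    \<and> (\<forall>z\<in>unit_disc. g z \<notin> {ag z, bg z, cg z}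
                         \<and> sigma (ag z) (bg z) * sigma (ag z) (cg z) * sigma (bg z) (cg z) \<ge> \<epsilon>)))
              \<longrightarrow> normal_family unit_disc Fam)"
proof -
  have P1: "\<forall>n. sph_continuous_on unit_disc (a n) \<and> sph_continuous_on unit_disc (b n)
              \<and> sph_continuous_on unit_disc (c n)"
  proof
    fix n
    have A: "sph_continuous_on unit_disc (a n)"
      unfolding sph_continuous_on_def a_def sigma_self_fin by (auto intro!: exI[of _ 1])
    have B: "sph_continuous_on unit_disc (b n)"
      unfolding sph_continuous_on_def b_def sigma_self_inf by (auto intro!: exI[of _ 1])
    define \<phi> where "\<phi> = (\<lambda>z::complex. - exp (\<i> * of_nat n * of_real (Im z)))"
    have cphi: "continuous_on UNIV \<phi>" unfolding \<phi>_def by (intro continuous_intros)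
    have C: "sph_continuous_on unit_disc (c n)"
      unfolding sph_continuous_on_def
    proof (intro ballI allI impI)
      fix z e assume "z \<in> unit_disc" "(e::real) > 0"
      then obtain d1 where d1: "d1 > 0" "\<forall>x y. cmod (x - y) < d1 \<longrightarrow> sigma (Fin x) (Fin y) < e"
        using sigma_small by blast
      obtain d where d: "d > 0" "\<forall>w\<in>UNIV. dist w z < d \<longrightarrow> dist (\<phi> w) (\<phi> z) < d1"
        using cphi d1(1) unfolding continuous_on_iff by blast
      show "\<exists>d>0. \<forall>w\<in>unit_disc. cmod (w - z) < d \<longrightarrow> sigma (c n w) (c n z) < e"
      proof (intro exI[of _ d] conjI ballI impI)
        fix w assume "cmod (w - z) < d"
        then have "cmod (\<phi> w - \<phi> z) < d1" using d(2) by (auto simp: dist_norm)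
        then show "sigma (c n w) (c n z) < e" using d1(2) unfolding c_def \<phi>_def by blast
      qed (use d in auto)
    qed
    show "sph_continuous_on unit_disc (a n) \<and> sph_continuous_on unit_disc (b n)
              \<and> sph_continuous_on unit_disc (c n)" using A B C by blast
  qed
  have P2: "\<forall>n. \<forall>z\<in>unit_disc. f n z \<notin> {a n z, b n z, c n z}"
  proof (intro allI ballI)
    fix n z
    define E where "E = exp (\<i> * of_nat n * of_real (Im z))"
    have E0: "E \<noteq> 0" unfolding E_def by simp
    have "of_nat n * z = of_real (real n * Re z) + \<i> * of_nat n * of_real (Im z)"
      by (simp add: complex_eq_iff)
    then have "exp (of_nat n * z) = exp (of_real (real n * Re z)) * E"
      unfolding E_def by (simp only: exp_add)
    then have e: "exp (of_nat n * z) = of_real (exp (real n * Re z)) * E"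
      by (simp only: exp_of_real)
    have ne: "exp (of_nat n * z) \<noteq> - E"
    proof
      assume "exp (of_nat n * z) = - E"
      then have "of_real (exp (real n * Re z)) * E = (-1) * E" using e by simp
      then have "(of_real (exp (real n * Re z)) :: complex) = -1"
        using E0 mult_right_cancel[of E "of_real (exp (real n * Re z))" "-1"] by simp
      then have "exp (real n * Re z) = -1"
        by (metis of_real_eq_iff of_real_minus of_real_1)
      then show False using exp_gt_zero[of "real n * Re z"] by linarith
    qed
    show "f n z \<notin> {a n z, b n z, c n z}"
      using ne unfolding f_def a_def b_def c_def E_def by auto
  qed
  have P3: "\<forall>n. \<forall>z\<in>unit_disc. sigma (a n z) (b n z) = pi / 2
              \<and> sigma (a n z) (c n z) = pi / 4 \<and> sigma (b n z) (c n z) = pi / 4"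
    by (simp add: a_def b_def c_def sigma_def cmod_expi arcsin_one_over_sqrt_2)
  have NN: "\<not> normal_family unit_disc (range f)"
  proof
    assume "normal_family unit_disc (range f)"
    then have "range f \<subseteq> range f \<longrightarrow> (\<exists>r g. strict_mono r \<and> sph_meromorphic_on unit_disc g \<and> sph_loc_unif_conv unit_disc (f \<circ> r) g)"
      unfolding normal_family_def by (rule spec)
    then have "\<exists>r g. strict_mono r \<and> sph_meromorphic_on unit_disc g \<and> sph_loc_unif_conv unit_disc (f \<circ> r) g"
      using subset_refl by (rule mp)
    then obtain r g where r: "strict_mono r" and mg: "sph_meromorphic_on unit_disc g"
      and cv: "sph_loc_unif_conv unit_disc (f \<circ> r) g"
      by (elim exE conjE)
    have pt: "\<forall>e>0. \<exists>N. \<forall>k\<ge>N. sigma (f (r k) z) (g z) < e" if "z \<in> unit_disc" for z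
    proof (intro allI impI)
      fix e :: real assume e: "e > 0"
      have K: "compact {z} \<and> {z} \<subseteq> unit_disc" using that by simp
      obtain N where N: "\<forall>k\<ge>N. \<forall>z'\<in>{z}. sigma ((f \<circ> r) k z') (g z') < e"
        using cv[unfolded sph_loc_unif_conv_def, rule_format, OF K e] by (elim exE)
      show "\<exists>N. \<forall>k\<ge>N. sigma (f (r k) z) (g z) < e"
        using N by (intro exI[of _ N]) simp
    qed
    have z0: "0 \<in> unit_disc" by (simp add: unit_disc_def)
    have g0: "g 0 \<noteq> Infty"
    proof
      assume g0: "g 0 = Infty"
      obtain N where "\<forall>k\<ge>N. sigma (f (r k) 0) (g 0) < pi / 4"
        using pt[OF z0] pi_gt_zero by (meson divide_pos_pos zero_less_numeral)
      then have "sigma (f (r N) 0) (g 0) < pi / 4" by blast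
      then show False using g0 by (simp add: f_def sigma_def arcsin_one_over_sqrt_2)
    qed
    have ginf: "g (of_real t) = Infty" if t: "0 < t" "t < 1" for t
    proof (rule ccontr)
      assume "g (of_real t) \<noteq> Infty"
      then obtain w where w: "g (of_real t) = Fin w" by (cases "g (of_real t)") auto
      have "of_real t \<in> unit_disc" using t by (simp add: unit_disc_def)
      from pt[OF this] have "\<forall>e>0. \<exists>N. \<forall>k\<ge>N. sigma (Fin (exp (of_nat (r k) * of_real t))) (Fin w) < e"
        using w by (simp add: f_def)
      then show False using big_not_close[OF r t(1)] by blast
    qed
    from mg z0 obtain \<rho> where \<rho>: "\<rho> > 0" "ball 0 \<rho> \<subseteq> unit_disc" and
      cs: "(\<exists>h. h holomorphic_on ball 0 \<rho> \<and> (\<forall>w\<in>ball 0 \<rho>. g w = Fin (h w))) \<or>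
         (\<exists>h. h holomorphic_on ball 0 \<rho> \<and>
              (\<forall>w\<in>ball 0 \<rho>. (h w = 0 \<longrightarrow> g w = Infty) \<and> (h w \<noteq> 0 \<longrightarrow> g w = Fin (1 / h w))))"
      unfolding sph_meromorphic_on_def by blast
    show False
      using cs
    proof
      assume "\<exists>h. h holomorphic_on ball 0 \<rho> \<and> (\<forall>w\<in>ball 0 \<rho>. g w = Fin (h w))"
      then obtain h where h: "\<forall>w\<in>ball 0 \<rho>. g w = Fin (h w)" by blast
      define t where "t = min \<rho> 1 / 2"
      have t: "0 < t" "t < 1" "of_real t \<in> ball (0::complex) \<rho>" using \<rho>(1) by (auto simp: t_def)
      show False using h t ginf[of t] by auto
    next
      assume "\<exists>h. h holomorphic_on ball 0 \<rho> \<and>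
              (\<forall>w\<in>ball 0 \<rho>. (h w = 0 \<longrightarrow> g w = Infty) \<and> (h w \<noteq> 0 \<longrightarrow> g w = Fin (1 / h w)))"
      then obtain h where hh: "h holomorphic_on ball 0 \<rho>" and
        h: "\<forall>w\<in>ball 0 \<rho>. (h w = 0 \<longrightarrow> g w = Infty) \<and> (h w \<noteq> 0 \<longrightarrow> g w = Fin (1 / h w))" by blast
      have h0: "h 0 \<noteq> 0" using h g0 \<rho>(1) by auto
      have "continuous_on (ball 0 \<rho>) h" using hh by (rule holomorphic_on_imp_continuous_on)
      then obtain d where d: "d > 0" "\<forall>x\<in>ball 0 \<rho>. dist x 0 < d \<longrightarrow> dist (h x) (h 0) < cmod (h 0)"
        using h0 \<rho>(1) unfolding continuous_on_iff by (metis centre_in_ball zero_less_norm_iff)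
      define t where "t = min (min \<rho> 1) d / 2"
      have t: "0 < t" "t < 1" "of_real t \<in> ball (0::complex) \<rho>" "dist (of_real t) (0::complex) < d"
        using \<rho>(1) d(1) by (auto simp: t_def)
      have ht: "h (of_real t) \<noteq> 0 \<longrightarrow> g (of_real t) = Fin (1 / h (of_real t))"
        using h t(3) by blast
      have "h (of_real t) = 0" using ht ginf[OF t(1,2)] by auto
      moreover have "dist (h (of_real t)) (h 0) < cmod (h 0)" using d(2) t(3,4) by blast
      ultimately show False by (simp add: dist_norm)
    qed
  qed
  have P5: "\<not> (\<forall>(Fam :: (complex \<Rightarrow> ecomplex) set) (\<epsilon>::real). \<epsilon> > 0 \<and>
              (\<forall>g\<in>Fam. sph_meromorphic_on unit_disc g \<and>
                 (\<exists>ag bg cg. sph_continuous_on unit_disc ag \<and> sph_continuous_on unit_disc bg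
                    \<and> sph_continuous_on unit_disc cg
                    \<and> (\<forall>z\<in>unit_disc. g z \<notin> {ag z, bg z, cg z}
                         \<and> sigma (ag z) (bg z) * sigma (ag z) (cg z) * sigma (bg z) (cg z) \<ge> \<epsilon>)))
              \<longrightarrow> normal_family unit_disc Fam)" (is "\<not> (\<forall>Fam \<epsilon>. ?Q Fam \<epsilon>)")
  proof
    assume H: "\<forall>Fam \<epsilon>. ?Q Fam \<epsilon>"
    define \<epsilon> where "\<epsilon> = (pi / 2) * (pi / 4) * (pi / 4)"
    have epos: "\<epsilon> > 0" unfolding \<epsilon>_def by simp
    have mer: "sph_meromorphic_on unit_disc (f n)" for n
      unfolding sph_meromorphic_on_def
    proof
      fix z0 assume z0: "z0 \<in> unit_disc"
      define \<rho> where "\<rho> = 1 - cmod z0"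
      have rpos: "\<rho> > 0" using z0 by (simp add: unit_disc_def \<rho>_def)
      have sub: "ball z0 \<rho> \<subseteq> unit_disc"
      proof
        fix w assume "w \<in> ball z0 \<rho>"
        then have "cmod (w - z0) < \<rho>" by (simp add: dist_norm norm_minus_commute)
        moreover have "cmod w \<le> cmod z0 + cmod (w - z0)" by (metis norm_triangle_sub)
        ultimately show "w \<in> unit_disc" by (simp add: unit_disc_def \<rho>_def)
      qed
      have "(\<lambda>w. exp (of_nat n * w)) holomorphic_on ball z0 \<rho>" by (intro holomorphic_intros)
      then show "\<exists>r>0. ball z0 r \<subseteq> unit_disc \<and>
        ((\<exists>h. h holomorphic_on ball z0 r \<and> (\<forall>w\<in>ball z0 r. f n w = Fin (h w))) \<or>
         (\<exists>h. h holomorphic_on ball z0 r \<and>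
              (\<forall>w\<in>ball z0 r. (h w = 0 \<longrightarrow> f n w = Infty) \<and> (h w \<noteq> 0 \<longrightarrow> f n w = Fin (1 / h w)))))"
        using rpos sub by (intro exI[of _ \<rho>] conjI disjI1 exI[of _ "\<lambda>w. exp (of_nat n * w)"]) (auto simp: f_def)
    qed
    have "?Q (range f) \<epsilon>" by (rule spec[OF spec[OF H, of "range f"], of \<epsilon>])
    moreover have "\<epsilon> > 0 \<and> (\<forall>g\<in>range f. sph_meromorphic_on unit_disc g \<and>
                 (\<exists>ag bg cg. sph_continuous_on unit_disc ag \<and> sph_continuous_on unit_disc bg
                    \<and> sph_continuous_on unit_disc cg
                    \<and> (\<forall>z\<in>unit_disc. g z \<notin> {ag z, bg z, cg z}
                         \<and> sigma (ag z) (bg z) * sigma (ag z) (cg z) * sigma (bg z) (cg z) \<ge> \<epsilon>)))"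
    proof (intro conjI ballI epos)
      fix g assume "g \<in> range f"
      then obtain n where gn: "g = f n" by blast
      show "sph_meromorphic_on unit_disc g" using mer gn by simp
      show "\<exists>ag bg cg. sph_continuous_on unit_disc ag \<and> sph_continuous_on unit_disc bg
                    \<and> sph_continuous_on unit_disc cg
                    \<and> (\<forall>z\<in>unit_disc. g z \<notin> {ag z, bg z, cg z}
                         \<and> sigma (ag z) (bg z) * sigma (ag z) (cg z) * sigma (bg z) (cg z) \<ge> \<epsilon>)"
      proof (rule exI[of _ "a n"], rule exI[of _ "b n"], rule exI[of _ "c n"], intro conjI ballI)
        show "sph_continuous_on unit_disc (a n)" "sph_continuous_on unit_disc (b n)"
          "sph_continuous_on unit_disc (c n)" using P1 by blast+
        fix z assume z: "z \<in> unit_disc"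
        show "g z \<notin> {a n z, b n z, c n z}" using P2 z gn by blast
        have "sigma (a n z) (b n z) = pi / 2" "sigma (a n z) (c n z) = pi / 4"
          "sigma (b n z) (c n z) = pi / 4" using P3 z by blast+
        then show "sigma (a n z) (b n z) * sigma (a n z) (c n z) * sigma (b n z) (c n z) \<ge> \<epsilon>"
          unfolding \<epsilon>_def by (simp only:)
      qed
    qed
    ultimately have "normal_family unit_disc (range f)" by (rule mp)
    then show False using NN by blast
  qed
  show ?thesis using P1 P2 P3 NN P5 by (intro conjI)
qed

end
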